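(* Let $M$ be a monoid. Then $\mathbb{X}(M)$ is a strong $M$-partial order.
   Context: A monoid is a semigroup with a two-sided identity $1_M$; by convention, whenever a monoid acts on a set, $1_M$ acts as the identity. An $M$-partial order is a set $X$ with an action of $M$ and a partial order $\leq_X$ such that $x\leq_X y$ implies $ax\leq_X ay$ for all $x,y\in X$, $a\in M$. An $M$-partial order $X$ is strong if for all $y\in X$ and $a\in M$, $\{ax : x\in X,\ x\leq_X y\}=\{x\in X : x\leq_X ay\}$. $\mathbb{X}(M)=\{aM : a\in M\}$ (the set of principal right ideals of $M$), partially ordered by inclusion, with $M$ acting by left multiplication: $b\cdot(aM)=baM$. *)

theory Defs
  imports Main
begin

definition monoid_action :: "'x set \<Rightarrow> ('m::monoid_mult \<Rightarrow> 'x \<Rightarrow> 'x) \<Rightarrow> bool" where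
  "monoid_action X act \<longleftrightarrow>
     (\<forall>a x. x \<in> X \<longrightarrow> act a x \<in> X) \<and>
     (\<forall>x\<in>X. act 1 x = x) \<and>
     (\<forall>a b x. x \<in> X \<longrightarrow> act (a * b) x = act a (act b x))"

definition partial_order_set :: "'x set \<Rightarrow> ('x \<Rightarrow> 'x \<Rightarrow> bool) \<Rightarrow> bool" where
  "partial_order_set X le \<longleftrightarrow>
     (\<forall>x\<in>X. le x x) \<and>
     (\<forall>x\<in>X. \<forall>y\<in>X. le x y \<and> le y x \<longrightarrow> x = y) \<and>
     (\<forall>x\<in>X. \<forall>y\<in>X. \<forall>z\<in>X. le x y \<and> le y z \<longrightarrow> le x z)"

definition M_partial_order :: "'x set \<Rightarrow> ('m::monoid_mult \<Rightarrow> 'x \<Rightarrow> 'x) \<Rightarrow> ('x \<Rightarrow> 'x \<Rightarrow> bool) \<Rightarrow> bool" where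
  "M_partial_order X act le \<longleftrightarrow>
     monoid_action X act \<and> partial_order_set X le \<and>
     (\<forall>x\<in>X. \<forall>y\<in>X. \<forall>a. le x y \<longrightarrow> le (act a x) (act a y))"

definition strong_M_partial_order :: "'x set \<Rightarrow> ('m::monoid_mult \<Rightarrow> 'x \<Rightarrow> 'x) \<Rightarrow> ('x \<Rightarrow> 'x \<Rightarrow> bool) \<Rightarrow> bool" where
  "strong_M_partial_order X act le \<longleftrightarrow>
     M_partial_order X act le \<and>
     (\<forall>y\<in>X. \<forall>a. {act a x | x. x \<in> X \<and> le x y} = {x \<in> X. le x (act a y)})"

definition principal_right_ideals :: "('m::monoid_mult) set set" where
  "principal_right_ideals = {(\<lambda>m. a * m) ` UNIV | a. True}"

definition left_mult_action :: "'m::monoid_mult \<Rightarrow> 'm set \<Rightarrow> 'm set" where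
  "left_mult_action b S = (\<lambda>s. b * s) ` S"

end

theory Submission
  imports Defs
begin

lemma pri_mem: "S \<in> principal_right_ideals \<longleftrightarrow> (\<exists>a. S = range (\<lambda>m. a * m))"
  by (auto simp: principal_right_ideals_def)

lemma act_range: "left_mult_action b (range (\<lambda>m. a * m)) = range (\<lambda>m. (b*a) * m)"
  by (auto simp: left_mult_action_def mult.assoc image_iff)

lemma sub_iff: "range (\<lambda>m. (c::'m::monoid_mult) * m) \<subseteq> range (\<lambda>m. a * m) \<longleftrightarrow> (\<exists>k. c = a * k)"
proof
  assume "range (\<lambda>m. c * m) \<subseteq> range (\<lambda>m. a * m)"
  then have "c * 1 \<in> range (\<lambda>m. a * m)" by blast
  then show "\<exists>k. c = a * k" by auto
next
  assume "\<exists>k. c = a * k"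
  then obtain k where "c = a * k" by blast
  then show "range (\<lambda>m. c * m) \<subseteq> range (\<lambda>m. a * m)"
    by (auto simp: mult.assoc)
qed

theorem lemma2p1:
  shows "strong_M_partial_order (principal_right_ideals :: ('m::monoid_mult) set set)
           (left_mult_action :: 'm \<Rightarrow> 'm set \<Rightarrow> 'm set) (\<subseteq>)"
proof -
  have act: "monoid_action (principal_right_ideals :: 'm set set) left_mult_action"
  proof -
    have 1: "\<forall>a x. x \<in> (principal_right_ideals :: 'm set set) \<longrightarrow> left_mult_action a x \<in> principal_right_ideals"
    proof (intro allI impI)
      fix a :: 'm and x :: "'m set"
      assume "x \<in> principal_right_ideals"
      then obtain c where xc: "x = range (\<lambda>m. c * m)" unfolding pri_mem by blast
      have "left_mult_action a x = range (\<lambda>m. (a*c) * m)" unfolding xc by (rule act_range)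
      then show "left_mult_action a x \<in> principal_right_ideals"
        unfolding pri_mem by blast
    qed
    have 2: "\<forall>x\<in>(principal_right_ideals :: 'm set set). left_mult_action 1 x = x"
      by (simp add: left_mult_action_def)
    have 3: "\<forall>a b x. x \<in> (principal_right_ideals :: 'm set set) \<longrightarrow>
        left_mult_action (a * b) x = left_mult_action a (left_mult_action b x)"
      by (simp add: left_mult_action_def image_image mult.assoc)
    show ?thesis unfolding monoid_action_def using 1 2 3 by (simp only:)
  qed
  have po: "partial_order_set (principal_right_ideals :: 'm set set) (\<subseteq>)"
    unfolding partial_order_set_def using subset_antisym subset_trans by fast
  have mono: "\<forall>x\<in>(principal_right_ideals :: 'm set set). \<forall>y\<in>principal_right_ideals. \<forall>a.
      x \<subseteq> y \<longrightarrow> left_mult_action a x \<subseteq> left_mult_action a y"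
    unfolding left_mult_action_def by (meson image_mono)
  have strong: "\<forall>y\<in>(principal_right_ideals :: 'm set set). \<forall>a.
     {left_mult_action a x | x. x \<in> principal_right_ideals \<and> x \<subseteq> y}
       = {x \<in> principal_right_ideals. x \<subseteq> left_mult_action a y}"
  proof (intro ballI allI set_eqI iffI)
    fix y :: "'m set" and a z
    assume y: "y \<in> principal_right_ideals"
    then obtain b where yb: "y = range (\<lambda>m. b * m)" by (auto simp: pri_mem)
    {
      assume "z \<in> {left_mult_action a x | x. x \<in> principal_right_ideals \<and> x \<subseteq> y}"
      then obtain x where z: "z = left_mult_action a x" and x: "x \<in> principal_right_ideals" "x \<subseteq> y" by blast
      then obtain c where xc: "x = range (\<lambda>m. c * m)" by (auto simp: pri_mem)
      from x(2) obtain k where "c = b * k" using sub_iff[of c b] by (auto simp: xc yb)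
      have zr: "z = range (\<lambda>m. (a*c) * m)" using z xc act_range by simp
      have ay: "left_mult_action a y = range (\<lambda>m. (a*b) * m)" using yb act_range by simp
      have "a*c = (a*b)*k" using \<open>c = b * k\<close> by (simp add: mult.assoc)
      then have "z \<subseteq> left_mult_action a y" unfolding zr ay sub_iff by blast
      moreover have "z \<in> principal_right_ideals" unfolding zr pri_mem by blast
      ultimately show "z \<in> {x \<in> principal_right_ideals. x \<subseteq> left_mult_action a y}"
        by blast
    }
    {
      assume "z \<in> {x \<in> principal_right_ideals. x \<subseteq> left_mult_action a y}"
      then obtain c where zc: "z = range (\<lambda>m. c * m)" and sub: "z \<subseteq> left_mult_action a y"
        by (auto simp: pri_mem)
      from sub obtain k where ck: "c = (a*b) * k" by (auto simp: zc yb act_range sub_iff)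
      let ?x = "range (\<lambda>m. (b*k) * m)"
      have "?x \<in> principal_right_ideals" by (auto simp: pri_mem)
      moreover have "?x \<subseteq> y" by (simp add: yb sub_iff) (metis mult.assoc)
      moreover have "z = left_mult_action a ?x" unfolding act_range zc ck by (simp only: mult.assoc)
      ultimately show "z \<in> {left_mult_action a x | x. x \<in> principal_right_ideals \<and> x \<subseteq> y}"
        by blast
    }
  qed
  show ?thesis unfolding strong_M_partial_order_def M_partial_order_def
    by (rule conjI[OF conjI[OF act conjI[OF po mono]] strong])
qed

end
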